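(* Assume (A1)–(A3) below. The overidentifying restrictions hold, i.e. there is $\beta_0\in\mathbb R$ with $\mathbb E[(Y_i-\beta_0D_i)(Z_{\ell i}-p_\ell)]=0$ for all $\ell=1,\dots,L$, if and only if $\mathrm{Wald}_1=\mathrm{Wald}_2=\cdots=\mathrm{Wald}_L$. Equivalently, $\mathrm{Wald}_1=\cdots=\mathrm{Wald}_L$ holds if and only if there exists $\beta_0$ such that $\sum_{t\in\mathcal T}\alpha_t(\ell)(\mathrm{LATE}_t-\beta_0)=0$ for every $\ell$.
   Context: Observe i.i.d. $(Y_i,D_i,\mathbf Z_i)$, $D_i\in\{0,1\}$, $\mathbf Z_i=(Z_{1i},\dots,Z_{Li})'\in\{0,1\}^L$, $L\ge2$. Units have potential outcomes $Y_i(0),Y_i(1)$ and a compliance type $D_i(\cdot):\{0,1\}^L\to\{0,1\}$, $D_i=D_i(\mathbf Z_i)$, $Y_i=D_iY_i(1)+(1-D_i)Y_i(0)$; $\mathcal T$ is the set of types, $\theta_t=P(D_i(\cdot)=t)$, $\mathrm{LATE}_t=\mathbb E[Y_i(1)-Y_i(0)\mid D_i(\cdot)=t]$, and $t(z_\ell,z_{-\ell})$ is type $t$'s treatment at the instrument vector with $\ell$-th coordinate $z_\ell$ and others $z_{-\ell}$. $p_\ell=P(Z_{\ell i}=1)$, $\pi_\ell,\rho_\ell$ are the differences in $\mathbb E[D_i\mid Z_{\ell i}=z]$ and $\mathbb E[Y_i\mid Z_{\ell i}=z]$ between $z=1$ and $z=0$, $\mathrm{Wald}_\ell=\rho_\ell/\pi_\ell$,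 $\Sigma_Z=\mathrm{Var}(\mathbf Z_i)$. $q_\ell(z_{-\ell})=P(Z_{-\ell}=z_{-\ell}\mid Z_\ell=1)$, $q^0_\ell(z_{-\ell})=P(Z_{-\ell}=z_{-\ell}\mid Z_\ell=0)$, $\varphi_t(\ell)=\sum_{z_{-\ell}}[t(1,z_{-\ell})q_\ell(z_{-\ell})-t(0,z_{-\ell})q^0_\ell(z_{-\ell})]$, $\alpha_t(\ell)=\theta_t\varphi_t(\ell)/\pi_\ell$. Assumptions: (A1) $(Y_i(0),Y_i(1),D_i(\cdot))$ independent of $\mathbf Z_i$. (A2) $D_i(z)$ nondecreasing in each coordinate for every $i$. (A3) $p_\ell>0$, $\pi_\ell>0$ for all $\ell$; $\Sigma_Z$ positive definite. (The paper phrases the first part as: the Hansen $J$-test of overidentifying restrictions is a joint test of $H_0:\mathrm{Wald}_1=\cdots=\mathrm{Wald}_L$.) *)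

theory Defs
  imports "HOL-Probability.Probability"
begin

text \<open>Units are points of a probability space M (i.i.d. sampling: one generic unit).
  Instruments are indexed by a finite type 'l (L = CARD('l)); an instrument vector is
  z :: 'l \<Rightarrow> bool (True = 1).  A compliance type is t :: ('l \<Rightarrow> bool) \<Rightarrow> bool.
  C \<omega> is the compliance type of the unit, Zv \<omega> its instrument vector.\<close>

definition cmean :: "'a measure \<Rightarrow> ('a \<Rightarrow> real) \<Rightarrow> 'a set \<Rightarrow> real" where
  "cmean M X A = (\<integral>\<omega>. X \<omega> * indicator A \<omega> \<partial>M) / measure M A"

definition Zr :: "('a \<Rightarrow> 'l \<Rightarrow> bool) \<Rightarrow> 'l \<Rightarrow> 'a \<Rightarrow> real" where
  "Zr Zv l \<omega> = of_bool (Zv \<omega> l)"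

definition Dobs :: "('a \<Rightarrow> ('l \<Rightarrow> bool) \<Rightarrow> bool) \<Rightarrow> ('a \<Rightarrow> 'l \<Rightarrow> bool) \<Rightarrow> 'a \<Rightarrow> real" where
  "Dobs C Zv \<omega> = of_bool (C \<omega> (Zv \<omega>))"

definition Yobs :: "('a \<Rightarrow> real) \<Rightarrow> ('a \<Rightarrow> real) \<Rightarrow> ('a \<Rightarrow> ('l \<Rightarrow> bool) \<Rightarrow> bool)
    \<Rightarrow> ('a \<Rightarrow> 'l \<Rightarrow> bool) \<Rightarrow> 'a \<Rightarrow> real" where
  "Yobs Y0 Y1 C Zv \<omega> = (if C \<omega> (Zv \<omega>) then Y1 \<omega> else Y0 \<omega>)"

definition pZ :: "'a measure \<Rightarrow> ('a \<Rightarrow> 'l \<Rightarrow> bool) \<Rightarrow> 'l \<Rightarrow> real" where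
  "pZ M Zv l = measure M {\<omega>\<in>space M. Zv \<omega> l}"

definition zdiff :: "'a measure \<Rightarrow> ('a \<Rightarrow> 'l \<Rightarrow> bool) \<Rightarrow> ('a \<Rightarrow> real) \<Rightarrow> 'l \<Rightarrow> real" where
  "zdiff M Zv X l = cmean M X {\<omega>\<in>space M. Zv \<omega> l} - cmean M X {\<omega>\<in>space M. \<not> Zv \<omega> l}"

definition piZ where "piZ M C Zv l = zdiff M Zv (Dobs C Zv) l"
definition rhoZ where "rhoZ M Y0 Y1 C Zv l = zdiff M Zv (Yobs Y0 Y1 C Zv) l"
definition wald where "wald M Y0 Y1 C Zv l = rhoZ M Y0 Y1 C Zv l / piZ M C Zv l"

definition covZ :: "'a measure \<Rightarrow> ('a \<Rightarrow> 'l \<Rightarrow> bool) \<Rightarrow> 'l \<Rightarrow> 'l \<Rightarrow> real" where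
  "covZ M Zv l k = (\<integral>\<omega>. Zr Zv l \<omega> * Zr Zv k \<omega> \<partial>M) - pZ M Zv l * pZ M Zv k"

definition covZ_posdef :: "'a measure \<Rightarrow> ('a \<Rightarrow> ('l::finite) \<Rightarrow> bool) \<Rightarrow> bool" where
  "covZ_posdef M Zv \<longleftrightarrow>
     (\<forall>v :: 'l \<Rightarrow> real. v \<noteq> (\<lambda>_. 0) \<longrightarrow> (\<Sum>l\<in>UNIV. \<Sum>k\<in>UNIV. v l * v k * covZ M Zv l k) > 0)"

definition theta where "theta M C t = measure M {\<omega>\<in>space M. C \<omega> = t}"

definition late where
  "late M Y0 Y1 C t = cmean M (\<lambda>\<omega>. Y1 \<omega> - Y0 \<omega>) {\<omega>\<in>space M. C \<omega> = t}"

text \<open>q_l(z_{-l}) and q^0_l(z_{-l}); z_{-l} is represented by a full vector w (its l-th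
  coordinate is irrelevant)\<close>
definition q1 :: "'a measure \<Rightarrow> ('a \<Rightarrow> 'l \<Rightarrow> bool) \<Rightarrow> 'l \<Rightarrow> ('l \<Rightarrow> bool) \<Rightarrow> real" where
  "q1 M Zv l w = measure M {\<omega>\<in>space M. (\<forall>k. k \<noteq> l \<longrightarrow> Zv \<omega> k = w k) \<and> Zv \<omega> l}
                 / measure M {\<omega>\<in>space M. Zv \<omega> l}"

definition q0 :: "'a measure \<Rightarrow> ('a \<Rightarrow> 'l \<Rightarrow> bool) \<Rightarrow> 'l \<Rightarrow> ('l \<Rightarrow> bool) \<Rightarrow> real" where
  "q0 M Zv l w = measure M {\<omega>\<in>space M. (\<forall>k. k \<noteq> l \<longrightarrow> Zv \<omega> k = w k) \<and> \<not> Zv \<omega> l}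
                 / measure M {\<omega>\<in>space M. \<not> Zv \<omega> l}"

text \<open>the sum over z_{-l} ranges over vectors w with w l = False (one representative each)\<close>
definition phi :: "'a measure \<Rightarrow> ('a \<Rightarrow> ('l::finite) \<Rightarrow> bool) \<Rightarrow> (('l \<Rightarrow> bool) \<Rightarrow> bool) \<Rightarrow> 'l \<Rightarrow> real" where
  "phi M Zv t l = (\<Sum>w\<in>{w. \<not> w l}.
      of_bool (t (w(l := True))) * q1 M Zv l w - of_bool (t (w(l := False))) * q0 M Zv l w)"

definition alpha where
  "alpha M C Zv t l = theta M C t * phi M Zv t l / piZ M C Zv l"

text \<open>(A1): (Y(0),Y(1),D(.)) independent of Z.  Since D(.) and Z take finitely many
  values, this is independence of the joint law, written out on generating events.\<close>
definition indep_A1 :: "'a measure \<Rightarrow> ('a \<Rightarrow> real) \<Rightarrow> ('a \<Rightarrow> real)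
    \<Rightarrow> ('a \<Rightarrow> ('l \<Rightarrow> bool) \<Rightarrow> bool) \<Rightarrow> ('a \<Rightarrow> 'l \<Rightarrow> bool) \<Rightarrow> bool" where
  "indep_A1 M Y0 Y1 C Zv \<longleftrightarrow>
     (\<forall>A \<in> sets (borel :: (real \<times> real) measure). \<forall>t z.
        measure M {\<omega>\<in>space M. (Y0 \<omega>, Y1 \<omega>) \<in> A \<and> C \<omega> = t \<and> Zv \<omega> = z}
        = measure M {\<omega>\<in>space M. (Y0 \<omega>, Y1 \<omega>) \<in> A \<and> C \<omega> = t}
          * measure M {\<omega>\<in>space M. Zv \<omega> = z})"

end

theory Submission
  imports Defs
begin

lemma ALG3: "(\<Sum>t\<in>A. th t * f t / c * (L t - b)) = ((\<Sum>t\<in>A. th t * f t * L t) - b * (\<Sum>t\<in>A. th t * f t)) / c"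
  for th f L :: "'b \<Rightarrow> real"
  by (simp add: sum_subtractf sum_distrib_left sum_divide_distrib[symmetric] algebra_simps)

lemma ALG1:
  fixes th h1 h0 ph :: "'b \<Rightarrow> real"
  assumes "\<And>t. ph t = h1 t / p - h0 t / (1 - p)"
  shows "(\<Sum>t\<in>A. th t * ph t) = (\<Sum>t\<in>A. th t * h1 t) / p - (\<Sum>t\<in>A. th t * h0 t) / (1 - p)"
  by (simp add: assms sum_subtractf sum_divide_distrib right_diff_distrib)

lemma ALG2:
  fixes th h1 h0 ph a b L :: "'b \<Rightarrow> real"
  assumes "\<And>t. ph t = h1 t / p - h0 t / (1 - p)" and "\<And>t. b t - a t = th t * L t"
    and "p \<noteq> 0" "1 - p \<noteq> 0"
  shows "(\<Sum>t\<in>A. a t * p + (b t - a t) * h1 t) / p - (\<Sum>t\<in>A. a t * (1 - p) + (b t - a t) * h0 t) / (1 - p)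
     = (\<Sum>t\<in>A. th t * ph t * L t)"
proof -
  have "(\<Sum>t\<in>A. a t * p + (b t - a t) * h1 t) / p - (\<Sum>t\<in>A. a t * (1 - p) + (b t - a t) * h0 t) / (1 - p)
     = (\<Sum>t\<in>A. (a t * p + (b t - a t) * h1 t) / p - (a t * (1 - p) + (b t - a t) * h0 t) / (1 - p))"
    by (simp add: sum_subtractf sum_divide_distrib)
  also have "\<dots> = (\<Sum>t\<in>A. th t * ph t * L t)"
  proof (rule sum.cong[OF refl])
    fix t
    show "(a t * p + (b t - a t) * h1 t) / p - (a t * (1 - p) + (b t - a t) * h0 t) / (1 - p) = th t * ph t * L t"
      unfolding assms(1) assms(2) using assms(3,4) by (simp add: field_simps)
  qed
  finally show ?thesis .
qed

lemma EXW: "(\<exists>\<beta>::real. \<forall>l. \<beta> = w l) \<longleftrightarrow> (\<forall>l k. w l = w k)"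
  by (metis)

lemma VS: "(\<Sum>a\<in>UNIV. \<Sum>b\<in>UNIV. (\<lambda>k. if k = l then 1 else 0) a * (\<lambda>k. if k = l then 1 else 0) b * (f a b::real)) = f l l"
  for l :: "'l::finite"
proof -
  have e: "\<And>a b. (\<lambda>k. if k = l then 1 else 0) a * (\<lambda>k. if k = l then 1 else 0) b * (f a b::real)
     = (if b = l then (if a = l then f a b else 0) else 0)" by simp
  show ?thesis by (simp only: e sum.delta finite UNIV_I if_True)
qed

lemma ALG4:
  fixes p a b c d \<beta> :: real
  assumes "p \<noteq> 0" "1 - p \<noteq> 0"
  shows "((1 - p) * a - p * b) - \<beta> * ((1 - p) * c - p * d) = p * (1 - p) * ((a / p - b / (1 - p)) - \<beta> * (c / p - d / (1 - p)))"
proof -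
  define A where "A = a / p"
  define B where "B = b / (1 - p)"
  define Cc where "Cc = c / p"
  define Dd where "Dd = d / (1 - p)"
  have e: "a = p * A" "b = (1 - p) * B" "c = p * Cc" "d = (1 - p) * Dd"
    using assms by (simp_all add: A_def B_def Cc_def Dd_def)
  have "((1 - p) * (p * A) - p * ((1 - p) * B)) - \<beta> * ((1 - p) * (p * Cc) - p * ((1 - p) * Dd))
      = p * (1 - p) * ((A - B) - \<beta> * (Cc - Dd))"
    by (simp add: algebra_simps)
  then show ?thesis unfolding e using assms by simp
qed

lemma sum_aux: "(\<Sum>z\<in>S. P z * (a + c z * d)) = a * (\<Sum>z\<in>S. P z) + d * (\<Sum>z\<in>S. c z * P z)"
  for P c :: "'b \<Rightarrow> real"
  by (simp add: sum.distrib sum_distrib_left ring_distribs mult_ac)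

context
  fixes M :: "'a measure" and Y0 Y1 :: "'a \<Rightarrow> real"
    and C :: "'a \<Rightarrow> ('l::finite \<Rightarrow> bool) \<Rightarrow> bool" and Zv :: "'a \<Rightarrow> 'l \<Rightarrow> bool"
  assumes P: "prob_space M"
    and Y0: "integrable M Y0" and Y1: "integrable M Y1"
    and Cmeas: "C \<in> measurable M (count_space UNIV)"
    and Zmeas: "Zv \<in> measurable M (count_space UNIV)"
    and A1: "indep_A1 M Y0 Y1 C Zv"
begin

lemma evC: "{\<omega>\<in>space M. Q (C \<omega>)} \<in> sets M"
proof -
  have "C -` {x. Q x} \<inter> space M \<in> sets M" by (rule measurable_sets[OF Cmeas]) simp
  moreover have "C -` {x. Q x} \<inter> space M = {\<omega>\<in>space M. Q (C \<omega>)}" by auto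
  ultimately show ?thesis by simp
qed

lemma evZ: "{\<omega>\<in>space M. Q (Zv \<omega>)} \<in> sets M"
proof -
  have "Zv -` {x. Q x} \<inter> space M \<in> sets M" by (rule measurable_sets[OF Zmeas]) simp
  moreover have "Zv -` {x. Q x} \<inter> space M = {\<omega>\<in>space M. Q (Zv \<omega>)}" by auto
  ultimately show ?thesis by simp
qed

lemma evZ1: "{\<omega>\<in>space M. Zv \<omega> = z} \<in> sets M"
  using evZ[of "\<lambda>x. x = z"] by simp

lemma evCZ: "{\<omega>\<in>space M. Q (C \<omega>) \<and> R (Zv \<omega>)} \<in> sets M"
proof -
  have "{\<omega>\<in>space M. Q (C \<omega>) \<and> R (Zv \<omega>)} = {\<omega>\<in>space M. Q (C \<omega>)} \<inter> {\<omega>\<in>space M. R (Zv \<omega>)}" by auto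
  then show ?thesis using sets.Int[OF evC[of Q] evZ[of R]] by simp
qed

lemma Tmeas: "(\<lambda>\<omega>. (Y0 \<omega>, Y1 \<omega>)) \<in> measurable M borel"
  using borel_measurable_integrable[OF Y0] borel_measurable_integrable[OF Y1] by (intro borel_measurable_Pair) auto

lemma MF:
  assumes "\<And>t z. F t z \<in> borel_measurable borel"
  shows "(\<lambda>\<omega>. F (C \<omega>) (Zv \<omega>) (Y0 \<omega>, Y1 \<omega>)) \<in> borel_measurable M"
proof -
  have "(\<lambda>\<omega>. (\<lambda>t \<omega>. F t (Zv \<omega>) (Y0 \<omega>, Y1 \<omega>)) (C \<omega>) \<omega>) \<in> borel_measurable M"
  proof (rule measurable_compose_countable'[OF _ Cmeas])
    fix t
    show "(\<lambda>\<omega>. F t (Zv \<omega>) (Y0 \<omega>, Y1 \<omega>)) \<in> borel_measurable M"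
    proof (rule measurable_compose_countable'[where f="\<lambda>z \<omega>. F t z (Y0 \<omega>, Y1 \<omega>)", OF _ Zmeas])
      fix z show "(\<lambda>\<omega>. F t z (Y0 \<omega>, Y1 \<omega>)) \<in> borel_measurable M"
        using measurable_compose[OF Tmeas assms] by simp
    qed simp
  qed simp
  then show ?thesis by simp
qed

lemma KL:
  fixes f :: "real \<times> real \<Rightarrow> real"
  assumes fm: "f \<in> borel_measurable borel"
  shows "(\<integral>\<omega>. f (Y0 \<omega>, Y1 \<omega>) * indicator {\<omega>\<in>space M. C \<omega> = t \<and> Zv \<omega> = z} \<omega> \<partial>M)
       = measure M {\<omega>\<in>space M. Zv \<omega> = z} * (\<integral>\<omega>. f (Y0 \<omega>, Y1 \<omega>) * indicator {\<omega>\<in>space M. C \<omega> = t} \<omega> \<partial>M)"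
proof -
  interpret prob_space M by (rule P)
  define T where "T = (\<lambda>\<omega>. (Y0 \<omega>, Y1 \<omega>))"
  define S1 where "S1 = {\<omega>\<in>space M. C \<omega> = t \<and> Zv \<omega> = z}"
  define S2 where "S2 = {\<omega>\<in>space M. C \<omega> = t}"
  define c where "c = measure M {\<omega>\<in>space M. Zv \<omega> = z}"
  have S1s: "S1 \<in> sets M" unfolding S1_def using evCZ[of "\<lambda>x. x = t" "\<lambda>x. x = z"] by simp
  have S2s: "S2 \<in> sets M" unfolding S2_def using evC[of "\<lambda>x. x = t"] by simp
  have c0: "c \<ge> 0" unfolding c_def by simp
  define g1 where "g1 = (\<lambda>\<omega>. indicator S1 \<omega> :: real)"
  define g2 where "g2 = (\<lambda>\<omega>. c * indicator S2 \<omega> :: real)"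
  have g1m: "g1 \<in> borel_measurable M" unfolding g1_def using S1s by simp
  have g2m: "g2 \<in> borel_measurable M" unfolding g2_def using S2s by simp
  have Tm: "T \<in> measurable M borel" unfolding T_def by (rule Tmeas)
  have Tm1: "T \<in> measurable (density M g1) borel" using Tm by simp
  have Tm2: "T \<in> measurable (density M g2) borel" using Tm by simp
  have eq: "distr (density M g1) borel T = distr (density M g2) borel T"
  proof (rule measure_eqI)
    fix A :: "(real \<times> real) set" assume A: "A \<in> sets (distr (density M g1) borel T)"
    then have Ab: "A \<in> sets borel" by simp
    have B: "T -` A \<inter> space M \<in> sets M" using measurable_sets[OF Tm Ab] .
    have "emeasure (distr (density M g1) borel T) A = emeasure (density M g1) (T -` A \<inter> space M)"
      using emeasure_distr[OF Tm1 Ab] by simp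
    also have "\<dots> = (\<integral>\<^sup>+ x. ennreal (g1 x) * indicator (T -` A \<inter> space M) x \<partial>M)"
      using emeasure_density[OF _ B] g1m by simp
    also have "\<dots> = (\<integral>\<^sup>+ x. indicator (S1 \<inter> (T -` A \<inter> space M)) x \<partial>M)"
      unfolding g1_def by (intro nn_integral_cong) (auto split: split_indicator)
    also have "\<dots> = emeasure M (S1 \<inter> (T -` A \<inter> space M))"
      using S1s B by simp
    also have "S1 \<inter> (T -` A \<inter> space M) = {\<omega>\<in>space M. (Y0 \<omega>, Y1 \<omega>) \<in> A \<and> C \<omega> = t \<and> Zv \<omega> = z}"
      unfolding S1_def T_def by auto
    finally have e1: "emeasure (distr (density M g1) borel T) A = 
       ennreal (measure M {\<omega>\<in>space M. (Y0 \<omega>, Y1 \<omega>) \<in> A \<and> C \<omega> = t \<and> Zv \<omega> = z})"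
      by (simp add: emeasure_eq_measure)
    have "emeasure (distr (density M g2) borel T) A = emeasure (density M g2) (T -` A \<inter> space M)"
      using emeasure_distr[OF Tm2 Ab] by simp
    also have "\<dots> = (\<integral>\<^sup>+ x. ennreal (g2 x) * indicator (T -` A \<inter> space M) x \<partial>M)"
      using emeasure_density[OF _ B] g2m by simp
    also have "\<dots> = (\<integral>\<^sup>+ x. ennreal c * indicator (S2 \<inter> (T -` A \<inter> space M)) x \<partial>M)"
      unfolding g2_def by (intro nn_integral_cong) (auto split: split_indicator)
    also have "\<dots> = ennreal c * emeasure M (S2 \<inter> (T -` A \<inter> space M))"
      using S2s B by (simp add: nn_integral_cmult_indicator)
    also have "S2 \<inter> (T -` A \<inter> space M) = {\<omega>\<in>space M. (Y0 \<omega>, Y1 \<omega>) \<in> A \<and> C \<omega> = t}"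
      unfolding S2_def T_def by auto
    finally have e2: "emeasure (distr (density M g2) borel T) A = 
       ennreal (measure M {\<omega>\<in>space M. (Y0 \<omega>, Y1 \<omega>) \<in> A \<and> C \<omega> = t} * c)"
      using c0 by (simp add: emeasure_eq_measure ennreal_mult mult.commute)
    show "emeasure (distr (density M g1) borel T) A = emeasure (distr (density M g2) borel T) A"
      unfolding e1 e2 c_def using A1 Ab unfolding indep_A1_def by simp
  qed simp
  have "integral\<^sup>L (distr (density M g1) borel T) f = integral\<^sup>L (distr (density M g2) borel T) f"
    by (simp only: eq)
  then have "(\<integral>\<omega>. g1 \<omega> *\<^sub>R f (T \<omega>) \<partial>M) = (\<integral>\<omega>. g2 \<omega> *\<^sub>R f (T \<omega>) \<partial>M)"
    using integral_distr[OF Tm1 fm] integral_distr[OF Tm2 fm]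
      integral_density[OF measurable_compose[OF Tm fm] g1m]
      integral_density[OF measurable_compose[OF Tm fm] g2m] c0
    by (simp add: g1_def g2_def o_def)
  also have "(\<integral>\<omega>. g2 \<omega> *\<^sub>R f (T \<omega>) \<partial>M) = c * (\<integral>\<omega>. f (T \<omega>) * indicator S2 \<omega> \<partial>M)"
    unfolding g2_def by (simp add: integral_mult_right_zero[symmetric] mult_ac del: integral_mult_right_zero)
  finally have fin: "(\<integral>\<omega>. g1 \<omega> *\<^sub>R f (T \<omega>) \<partial>M) = c * (\<integral>\<omega>. f (T \<omega>) * indicator S2 \<omega> \<partial>M)" .
  have "(\<integral>\<omega>. g1 \<omega> *\<^sub>R f (T \<omega>) \<partial>M) = (\<integral>\<omega>. f (T \<omega>) * indicator S1 \<omega> \<partial>M)"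
    unfolding g1_def by (simp add: mult.commute)
  then have X: "(\<integral>\<omega>. f (T \<omega>) * indicator S1 \<omega> \<partial>M) = c * (\<integral>\<omega>. f (T \<omega>) * indicator S2 \<omega> \<partial>M)"
    using fin by (rule subst)
  show ?thesis using X unfolding T_def S1_def S2_def c_def .
qed


lemma GL:
  assumes Fm0: "\<forall>t z. F t z \<in> borel_measurable borel"
    and Fi0: "\<forall>t z. integrable M (\<lambda>\<omega>. F t z (Y0 \<omega>, Y1 \<omega>))"
  shows "(\<integral>\<omega>. F (C \<omega>) (Zv \<omega>) (Y0 \<omega>, Y1 \<omega>) * indicator {\<omega>\<in>space M. Zv \<omega> \<in> S} \<omega> \<partial>M)
       = (\<Sum>t\<in>UNIV. \<Sum>z\<in>S. measure M {\<omega>\<in>space M. Zv \<omega> = z}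
            * (\<integral>\<omega>. F t z (Y0 \<omega>, Y1 \<omega>) * indicator {\<omega>\<in>space M. C \<omega> = t} \<omega> \<partial>M))"
proof -
  note Fm = Fm0[rule_format] and Fi = Fi0[rule_format]
  have pw: "F (C \<omega>) (Zv \<omega>) (Y0 \<omega>, Y1 \<omega>) * indicator {\<omega>\<in>space M. Zv \<omega> \<in> S} \<omega>
     = (\<Sum>t\<in>UNIV. \<Sum>z\<in>S. F t z (Y0 \<omega>, Y1 \<omega>) * indicator {\<omega>\<in>space M. C \<omega> = t \<and> Zv \<omega> = z} \<omega>)"
    if \<omega>: "\<omega> \<in> space M" for \<omega>
  proof -
    have e: "\<And>t z. F t z (Y0 \<omega>, Y1 \<omega>) * indicator {\<omega>\<in>space M. C \<omega> = t \<and> Zv \<omega> = z} \<omega>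
        = (if C \<omega> = t then (if Zv \<omega> = z then F t z (Y0 \<omega>, Y1 \<omega>) else 0) else 0)"
      using \<omega> by (auto simp: indicator_def)
    have "(\<Sum>t\<in>UNIV. \<Sum>z\<in>S. F t z (Y0 \<omega>, Y1 \<omega>) * indicator {\<omega>\<in>space M. C \<omega> = t \<and> Zv \<omega> = z} \<omega>)
        = (\<Sum>t\<in>UNIV. (if C \<omega> = t then (\<Sum>z\<in>S. if Zv \<omega> = z then F t z (Y0 \<omega>, Y1 \<omega>) else 0) else 0))"
      unfolding e by (intro sum.cong refl) auto
    also have "\<dots> = (\<Sum>z\<in>S. if Zv \<omega> = z then F (C \<omega>) z (Y0 \<omega>, Y1 \<omega>) else 0)"
      by (simp add: sum.delta)
    also have "\<dots> = (if Zv \<omega> \<in> S then F (C \<omega>) (Zv \<omega>) (Y0 \<omega>, Y1 \<omega>) else 0)"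
      by (simp add: sum.delta)
    finally show ?thesis using \<omega> by (simp add: indicator_def)
  qed
  have int: "integrable M (\<lambda>\<omega>. F t z (Y0 \<omega>, Y1 \<omega>) * indicator {\<omega>\<in>space M. C \<omega> = t \<and> Zv \<omega> = z} \<omega>)" for t z
    using integrable_real_mult_indicator[OF evCZ[of "\<lambda>x. x = t" "\<lambda>x. x = z"] Fi[of t z]] .
  have "(\<integral>\<omega>. F (C \<omega>) (Zv \<omega>) (Y0 \<omega>, Y1 \<omega>) * indicator {\<omega>\<in>space M. Zv \<omega> \<in> S} \<omega> \<partial>M)
     = (\<integral>\<omega>. (\<Sum>t\<in>UNIV. \<Sum>z\<in>S. F t z (Y0 \<omega>, Y1 \<omega>) * indicator {\<omega>\<in>space M. C \<omega> = t \<and> Zv \<omega> = z} \<omega>) \<partial>M)"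
    by (intro Bochner_Integration.integral_cong refl pw)
  also have "\<dots> = (\<Sum>t\<in>UNIV. \<Sum>z\<in>S. (\<integral>\<omega>. F t z (Y0 \<omega>, Y1 \<omega>) * indicator {\<omega>\<in>space M. C \<omega> = t \<and> Zv \<omega> = z} \<omega> \<partial>M))"
    apply (subst Bochner_Integration.integral_sum)
     apply (intro Bochner_Integration.integrable_sum int)
    apply (intro sum.cong refl Bochner_Integration.integral_sum int)
    done
  also have "\<dots> = (\<Sum>t\<in>UNIV. \<Sum>z\<in>S. measure M {\<omega>\<in>space M. Zv \<omega> = z}
            * (\<integral>\<omega>. F t z (Y0 \<omega>, Y1 \<omega>) * indicator {\<omega>\<in>space M. C \<omega> = t} \<omega> \<partial>M))"
    by (intro sum.cong refl KL Fm)
  finally show ?thesis .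
qed

lemma PS: "measure M {\<omega>\<in>space M. Zv \<omega> \<in> S} = (\<Sum>z\<in>S. measure M {\<omega>\<in>space M. Zv \<omega> = z})"
proof -
  interpret prob_space M by (rule P)
  have "measure M (\<Union>z\<in>S. {\<omega>\<in>space M. Zv \<omega> = z}) = (\<Sum>z\<in>S. measure M {\<omega>\<in>space M. Zv \<omega> = z})"
    by (rule finite_measure_finite_Union) (auto simp: disjoint_family_on_def evZ1)
  moreover have "(\<Union>z\<in>S. {\<omega>\<in>space M. Zv \<omega> = z}) = {\<omega>\<in>space M. Zv \<omega> \<in> S}" by auto
  ultimately show ?thesis by simp
qed

lemma Dm: "Dobs C Zv \<in> borel_measurable M"
  using MF[of "\<lambda>t z x. of_bool (t z)"] unfolding Dobs_def by simp

lemma Ym: "Yobs Y0 Y1 C Zv \<in> borel_measurable M"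
proof -
  have bm: "\<And>t z. (\<lambda>x::real\<times>real. if t z then snd x else fst x) \<in> borel_measurable borel"
    by (case_tac "t z") (auto simp: borel_prod[symmetric] intro: measurable_fst measurable_snd)
  have "(\<lambda>\<omega>. if C \<omega> (Zv \<omega>) then snd (Y0 \<omega>, Y1 \<omega>) else fst (Y0 \<omega>, Y1 \<omega>)) \<in> borel_measurable M"
    by (rule MF[of "\<lambda>t z x. if t z then snd x else fst x"]) (rule bm)
  then show ?thesis unfolding Yobs_def snd_conv fst_conv .
qed

lemma Di: "integrable M (Dobs C Zv)"
proof -
  interpret prob_space M by (rule P)
  show ?thesis
    by (rule Bochner_Integration.integrable_bound[OF integrable_const[of "1::real"] Dm]) (simp add: Dobs_def)
qed

lemma Yi: "integrable M (Yobs Y0 Y1 C Zv)"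
proof -
  have "integrable M (\<lambda>\<omega>. \<bar>Y0 \<omega>\<bar> + \<bar>Y1 \<omega>\<bar>)" using Y0 Y1 by simp
  then show ?thesis
    by (rule Bochner_Integration.integrable_bound[OF _ Ym]) (auto simp: Yobs_def)
qed

lemma LATE: "(\<integral>\<omega>. Y1 \<omega> * indicator {\<omega>\<in>space M. C \<omega> = t} \<omega> \<partial>M)
   - (\<integral>\<omega>. Y0 \<omega> * indicator {\<omega>\<in>space M. C \<omega> = t} \<omega> \<partial>M) = theta M C t * late M Y0 Y1 C t"
proof -
  interpret prob_space M by (rule P)
  define S where "S = {\<omega>\<in>space M. C \<omega> = t}"
  have Ss: "S \<in> sets M" unfolding S_def using evC[of "\<lambda>x. x = t"] by simp
  have d: "(\<integral>\<omega>. Y1 \<omega> * indicator S \<omega> \<partial>M) - (\<integral>\<omega>. Y0 \<omega> * indicator S \<omega> \<partial>M)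
      = (\<integral>\<omega>. (Y1 \<omega> - Y0 \<omega>) * indicator S \<omega> \<partial>M)"
    using integrable_real_mult_indicator[OF Ss Y0] integrable_real_mult_indicator[OF Ss Y1]
    by (simp add: left_diff_distrib)
  show ?thesis
  proof (cases "measure M S = 0")
    case True
    have "S \<in> null_sets M" using True Ss by (simp add: emeasure_eq_measure null_setsI)
    then have "AE \<omega> in M. \<omega> \<notin> S" by (rule AE_not_in)
    then have "AE \<omega> in M. (Y1 \<omega> - Y0 \<omega>) * indicator S \<omega> = 0"
      by eventually_elim simp
    then have "(\<integral>\<omega>. (Y1 \<omega> - Y0 \<omega>) * indicator S \<omega> \<partial>M) = 0" by (rule integral_eq_zero_AE)
    then show ?thesis using d True unfolding theta_def S_def by simp
  next
    case False
    then show ?thesis using d unfolding theta_def late_def cmean_def S_def by simp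
  qed
qed

lemma M0: "measure M {\<omega>\<in>space M. \<not> Zv \<omega> l} = 1 - pZ M Zv l"
proof -
  interpret prob_space M by (rule P)
  have E: "{\<omega>\<in>space M. Zv \<omega> l} \<in> sets M" using evZ[of "\<lambda>x. x l"] by simp
  have "{\<omega>\<in>space M. \<not> Zv \<omega> l} = space M - {\<omega>\<in>space M. Zv \<omega> l}" by auto
  then show ?thesis using prob_compl[OF E] unfolding pZ_def by simp
qed

lemma PS1: "(\<Sum>z\<in>{z. z l}. measure M {\<omega>\<in>space M. Zv \<omega> = z}) = pZ M Zv l"
  using PS[of "{z. z l}"] unfolding pZ_def by simp

lemma PS0: "(\<Sum>z\<in>{z. \<not> z l}. measure M {\<omega>\<in>space M. Zv \<omega> = z}) = 1 - pZ M Zv l"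
  using PS[of "{z. \<not> z l}"] M0 by simp

lemma ID: "(\<integral>\<omega>. Dobs C Zv \<omega> * indicator {\<omega>\<in>space M. Zv \<omega> \<in> S} \<omega> \<partial>M)
   = (\<Sum>t\<in>UNIV. theta M C t * (\<Sum>z\<in>S. of_bool (t z) * measure M {\<omega>\<in>space M. Zv \<omega> = z}))"
proof -
  interpret prob_space M by (rule P)
  have "(\<integral>\<omega>. Dobs C Zv \<omega> * indicator {\<omega>\<in>space M. Zv \<omega> \<in> S} \<omega> \<partial>M)
     = (\<Sum>t\<in>UNIV. \<Sum>z\<in>S. measure M {\<omega>\<in>space M. Zv \<omega> = z}
            * (\<integral>\<omega>. of_bool (t z) * indicator {\<omega>\<in>space M. C \<omega> = t} \<omega> \<partial>M))"
    using GL[of "\<lambda>t z x. of_bool (t z)" S] unfolding Dobs_def by simp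
  also have "\<dots> = (\<Sum>t\<in>UNIV. theta M C t * (\<Sum>z\<in>S. of_bool (t z) * measure M {\<omega>\<in>space M. Zv \<omega> = z}))"
    unfolding theta_def
    by (intro sum.cong refl) (simp add: sum_distrib_left mult_ac evC[of "\<lambda>x. x = _"])
  finally show ?thesis .
qed

lemma IY: "(\<integral>\<omega>. Yobs Y0 Y1 C Zv \<omega> * indicator {\<omega>\<in>space M. Zv \<omega> \<in> S} \<omega> \<partial>M)
   = (\<Sum>t\<in>UNIV. (\<integral>\<omega>. Y0 \<omega> * indicator {\<omega>\<in>space M. C \<omega> = t} \<omega> \<partial>M) * (\<Sum>z\<in>S. measure M {\<omega>\<in>space M. Zv \<omega> = z})
       + ((\<integral>\<omega>. Y1 \<omega> * indicator {\<omega>\<in>space M. C \<omega> = t} \<omega> \<partial>M) - (\<integral>\<omega>. Y0 \<omega> * indicator {\<omega>\<in>space M. C \<omega> = t} \<omega> \<partial>M))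
         * (\<Sum>z\<in>S. of_bool (t z) * measure M {\<omega>\<in>space M. Zv \<omega> = z}))"
proof -
  have bm: "\<forall>t z. (\<lambda>x::real\<times>real. if t z then snd x else fst x) \<in> borel_measurable borel"
    by (intro allI, case_tac "t z") (auto simp: borel_prod[symmetric] intro: measurable_fst measurable_snd)
  have bi: "\<forall>t z. integrable M (\<lambda>\<omega>. if t z then snd (Y0 \<omega>, Y1 \<omega>) else fst (Y0 \<omega>, Y1 \<omega>))"
    using Y0 Y1 by (intro allI, case_tac "t z") simp_all
  have "(\<integral>\<omega>. Yobs Y0 Y1 C Zv \<omega> * indicator {\<omega>\<in>space M. Zv \<omega> \<in> S} \<omega> \<partial>M)
     = (\<Sum>t\<in>UNIV. \<Sum>z\<in>S. measure M {\<omega>\<in>space M. Zv \<omega> = z}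
            * (\<integral>\<omega>. (if t z then snd (Y0 \<omega>, Y1 \<omega>) else fst (Y0 \<omega>, Y1 \<omega>)) * indicator {\<omega>\<in>space M. C \<omega> = t} \<omega> \<partial>M))"
    using GL[of "\<lambda>t z x. if t z then snd x else fst x" S, OF bm bi] unfolding Yobs_def snd_conv fst_conv .
  also have "\<dots> = (\<Sum>t\<in>UNIV. \<Sum>z\<in>S. measure M {\<omega>\<in>space M. Zv \<omega> = z}
            * ((\<integral>\<omega>. Y0 \<omega> * indicator {\<omega>\<in>space M. C \<omega> = t} \<omega> \<partial>M) + of_bool (t z) *
              ((\<integral>\<omega>. Y1 \<omega> * indicator {\<omega>\<in>space M. C \<omega> = t} \<omega> \<partial>M) - (\<integral>\<omega>. Y0 \<omega> * indicator {\<omega>\<in>space M. C \<omega> = t} \<omega> \<partial>M))))"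
    by (intro sum.cong refl) (case_tac "x z"; simp)
  also have "\<dots> = (\<Sum>t\<in>UNIV. (\<integral>\<omega>. Y0 \<omega> * indicator {\<omega>\<in>space M. C \<omega> = t} \<omega> \<partial>M) * (\<Sum>z\<in>S. measure M {\<omega>\<in>space M. Zv \<omega> = z})
       + ((\<integral>\<omega>. Y1 \<omega> * indicator {\<omega>\<in>space M. C \<omega> = t} \<omega> \<partial>M) - (\<integral>\<omega>. Y0 \<omega> * indicator {\<omega>\<in>space M. C \<omega> = t} \<omega> \<partial>M))
         * (\<Sum>z\<in>S. of_bool (t z) * measure M {\<omega>\<in>space M. Zv \<omega> = z}))"
    by (rule sum.cong[OF refl], rule sum_aux)
  finally show ?thesis .
qed

lemma REIDX: "(\<Sum>w\<in>{w. \<not> w l}. g (w(l:=True))) = (\<Sum>z\<in>{z. z l}. g z)"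
proof -
  have inj: "inj_on (\<lambda>w. w(l:=True)) {w. \<not> w l}"
  proof (rule inj_onI)
    fix x y assume xl: "x \<in> {w. \<not> w l}" and yl: "y \<in> {w. \<not> w l}" and eq: "x(l := True) = y(l := True)"
    show "x = y"
    proof (rule ext)
      fix k show "x k = y k"
      proof (cases "k = l")
        case True then show ?thesis using xl yl by simp
      next
        case False
        then have "(x(l:=True)) k = (y(l:=True)) k" using eq by simp
        then show ?thesis using False by simp
      qed
    qed
  qed
  have img: "(\<lambda>w. w(l:=True)) ` {w. \<not> w l} = {z. z l}"
  proof
    show "(\<lambda>w. w(l:=True)) ` {w. \<not> w l} \<subseteq> {z. z l}" by auto
    show "{z. z l} \<subseteq> (\<lambda>w. w(l:=True)) ` {w. \<not> w l}"
    proof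
      fix z assume zl: "z \<in> {z. z l}"
      show "z \<in> (\<lambda>w. w(l:=True)) ` {w. \<not> w l}"
        by (rule image_eqI[where x="z(l:=False)"]) (use zl in \<open>simp_all add: fun_upd_idem\<close>)
    qed
  qed
  show ?thesis using sum.reindex[OF inj, of g] unfolding img by (simp add: o_def)
qed

lemma PHI:
  assumes p0: "0 < pZ M Zv l" and p1: "pZ M Zv l < 1"
  shows "phi M Zv t l = (\<Sum>z\<in>{z. z l}. of_bool (t z) * measure M {\<omega>\<in>space M. Zv \<omega> = z}) / pZ M Zv l
     - (\<Sum>z\<in>{z. \<not> z l}. of_bool (t z) * measure M {\<omega>\<in>space M. Zv \<omega> = z}) / (1 - pZ M Zv l)"
proof -
  have q1: "q1 M Zv l w = measure M {\<omega>\<in>space M. Zv \<omega> = w(l:=True)} / pZ M Zv l" for w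
  proof -
    have "{\<omega>\<in>space M. (\<forall>k. k \<noteq> l \<longrightarrow> Zv \<omega> k = w k) \<and> Zv \<omega> l} = {\<omega>\<in>space M. Zv \<omega> = w(l:=True)}"
      by (auto simp: fun_eq_iff)
    then show ?thesis unfolding q1_def pZ_def by simp
  qed
  have q0: "q0 M Zv l w = measure M {\<omega>\<in>space M. Zv \<omega> = w} / (1 - pZ M Zv l)" if "\<not> w l" for w
  proof -
    have "{\<omega>\<in>space M. (\<forall>k. k \<noteq> l \<longrightarrow> Zv \<omega> k = w k) \<and> \<not> Zv \<omega> l} = {\<omega>\<in>space M. Zv \<omega> = w}"
      using that by (auto simp: fun_eq_iff)
    then show ?thesis unfolding q0_def M0[symmetric] by simp
  qed
  have "phi M Zv t l = (\<Sum>w\<in>{w. \<not> w l}. of_bool (t (w(l := True))) * measure M {\<omega>\<in>space M. Zv \<omega> = w(l:=True)} / pZ M Zv l)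
      - (\<Sum>w\<in>{w. \<not> w l}. of_bool (t w) * measure M {\<omega>\<in>space M. Zv \<omega> = w} / (1 - pZ M Zv l))"
    unfolding phi_def sum_subtractf[symmetric]
    by (intro sum.cong refl) (simp add: q1 q0 fun_upd_idem)
  also have "\<dots> = (\<Sum>z\<in>{z. z l}. of_bool (t z) * measure M {\<omega>\<in>space M. Zv \<omega> = z} / pZ M Zv l)
      - (\<Sum>w\<in>{w. \<not> w l}. of_bool (t w) * measure M {\<omega>\<in>space M. Zv \<omega> = w} / (1 - pZ M Zv l))"
    using REIDX[of "\<lambda>z. of_bool (t z) * measure M {\<omega>\<in>space M. Zv \<omega> = z} / pZ M Zv l"] by simp
  finally show ?thesis by (simp only: sum_divide_distrib)
qed

lemma DEC:
  assumes p0: "0 < pZ M Zv l" and p1: "pZ M Zv l < 1"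
  shows "piZ M C Zv l = (\<Sum>t\<in>UNIV. theta M C t * phi M Zv t l)"
    and "rhoZ M Y0 Y1 C Zv l = (\<Sum>t\<in>UNIV. theta M C t * phi M Zv t l * late M Y0 Y1 C t)"
proof -
  note ph = PHI[OF p0 p1]
  have ID1: "(\<integral>\<omega>. Dobs C Zv \<omega> * indicator {\<omega>\<in>space M. Zv \<omega> l} \<omega> \<partial>M)
   = (\<Sum>t\<in>UNIV. theta M C t * (\<Sum>z\<in>{z. z l}. of_bool (t z) * measure M {\<omega>\<in>space M. Zv \<omega> = z}))"
    using ID[of "{z. z l}"] unfolding mem_Collect_eq .
  have ID0: "(\<integral>\<omega>. Dobs C Zv \<omega> * indicator {\<omega>\<in>space M. \<not> Zv \<omega> l} \<omega> \<partial>M)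
   = (\<Sum>t\<in>UNIV. theta M C t * (\<Sum>z\<in>{z. \<not> z l}. of_bool (t z) * measure M {\<omega>\<in>space M. Zv \<omega> = z}))"
    using ID[of "{z. \<not> z l}"] unfolding mem_Collect_eq .
  show "piZ M C Zv l = (\<Sum>t\<in>UNIV. theta M C t * phi M Zv t l)"
    unfolding piZ_def zdiff_def cmean_def ID1 ID0 M0 pZ_def[symmetric]
    by (rule ALG1[symmetric], rule ph)
  have IY1: "(\<integral>\<omega>. Yobs Y0 Y1 C Zv \<omega> * indicator {\<omega>\<in>space M. Zv \<omega> l} \<omega> \<partial>M)
   = (\<Sum>t\<in>UNIV. (\<integral>\<omega>. Y0 \<omega> * indicator {\<omega>\<in>space M. C \<omega> = t} \<omega> \<partial>M) * pZ M Zv l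
       + ((\<integral>\<omega>. Y1 \<omega> * indicator {\<omega>\<in>space M. C \<omega> = t} \<omega> \<partial>M) - (\<integral>\<omega>. Y0 \<omega> * indicator {\<omega>\<in>space M. C \<omega> = t} \<omega> \<partial>M))
         * (\<Sum>z\<in>{z. z l}. of_bool (t z) * measure M {\<omega>\<in>space M. Zv \<omega> = z}))"
    using IY[of "{z. z l}"] unfolding mem_Collect_eq PS1[unfolded mem_Collect_eq] .
  have IY0: "(\<integral>\<omega>. Yobs Y0 Y1 C Zv \<omega> * indicator {\<omega>\<in>space M. \<not> Zv \<omega> l} \<omega> \<partial>M)
   = (\<Sum>t\<in>UNIV. (\<integral>\<omega>. Y0 \<omega> * indicator {\<omega>\<in>space M. C \<omega> = t} \<omega> \<partial>M) * (1 - pZ M Zv l)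
       + ((\<integral>\<omega>. Y1 \<omega> * indicator {\<omega>\<in>space M. C \<omega> = t} \<omega> \<partial>M) - (\<integral>\<omega>. Y0 \<omega> * indicator {\<omega>\<in>space M. C \<omega> = t} \<omega> \<partial>M))
         * (\<Sum>z\<in>{z. \<not> z l}. of_bool (t z) * measure M {\<omega>\<in>space M. Zv \<omega> = z}))"
    using IY[of "{z. \<not> z l}"] unfolding mem_Collect_eq PS0[unfolded mem_Collect_eq] .
  show "rhoZ M Y0 Y1 C Zv l = (\<Sum>t\<in>UNIV. theta M C t * phi M Zv t l * late M Y0 Y1 C t)"
    unfolding rhoZ_def zdiff_def cmean_def IY1 IY0 M0 pZ_def[symmetric]
    by (rule ALG2, rule ph, rule LATE) (use p0 p1 in auto)
qed

lemma MOM: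
  assumes p0: "0 < pZ M Zv l" and p1: "pZ M Zv l < 1"
  shows "(\<integral>\<omega>. (Yobs Y0 Y1 C Zv \<omega> - \<beta> * Dobs C Zv \<omega>) * (Zr Zv l \<omega> - pZ M Zv l) \<partial>M)
     = pZ M Zv l * (1 - pZ M Zv l) * (rhoZ M Y0 Y1 C Zv l - \<beta> * piZ M C Zv l)"
proof -
  define p where "p = pZ M Zv l"
  define E1 where "E1 = {\<omega>\<in>space M. Zv \<omega> l}"
  define E0 where "E0 = {\<omega>\<in>space M. \<not> Zv \<omega> l}"
  have E1s: "E1 \<in> sets M" unfolding E1_def using evZ[of "\<lambda>x. x l"] by simp
  have E0s: "E0 \<in> sets M" unfolding E0_def using evZ[of "\<lambda>x. \<not> x l"] by simp
  have iY1: "integrable M (\<lambda>\<omega>. Yobs Y0 Y1 C Zv \<omega> * indicator E1 \<omega>)"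
    by (rule integrable_real_mult_indicator[OF E1s Yi])
  have iY0: "integrable M (\<lambda>\<omega>. Yobs Y0 Y1 C Zv \<omega> * indicator E0 \<omega>)"
    by (rule integrable_real_mult_indicator[OF E0s Yi])
  have iD1: "integrable M (\<lambda>\<omega>. Dobs C Zv \<omega> * indicator E1 \<omega>)"
    by (rule integrable_real_mult_indicator[OF E1s Di])
  have iD0: "integrable M (\<lambda>\<omega>. Dobs C Zv \<omega> * indicator E0 \<omega>)"
    by (rule integrable_real_mult_indicator[OF E0s Di])
  have pw: "(Yobs Y0 Y1 C Zv \<omega> - \<beta> * Dobs C Zv \<omega>) * (Zr Zv l \<omega> - p)
     = ((1 - p) * (Yobs Y0 Y1 C Zv \<omega> * indicator E1 \<omega>) - p * (Yobs Y0 Y1 C Zv \<omega> * indicator E0 \<omega>))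
       - \<beta> * ((1 - p) * (Dobs C Zv \<omega> * indicator E1 \<omega>) - p * (Dobs C Zv \<omega> * indicator E0 \<omega>))"
    if "\<omega> \<in> space M" for \<omega>
    using that unfolding E1_def E0_def Zr_def
    by (cases "Zv \<omega> l") (simp_all add: indicator_def algebra_simps)
  have "(\<integral>\<omega>. (Yobs Y0 Y1 C Zv \<omega> - \<beta> * Dobs C Zv \<omega>) * (Zr Zv l \<omega> - p) \<partial>M)
     = (\<integral>\<omega>. ((1 - p) * (Yobs Y0 Y1 C Zv \<omega> * indicator E1 \<omega>) - p * (Yobs Y0 Y1 C Zv \<omega> * indicator E0 \<omega>))
       - \<beta> * ((1 - p) * (Dobs C Zv \<omega> * indicator E1 \<omega>) - p * (Dobs C Zv \<omega> * indicator E0 \<omega>)) \<partial>M)"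
    by (intro Bochner_Integration.integral_cong refl pw)
  also have "\<dots> = ((1 - p) * (\<integral>\<omega>. Yobs Y0 Y1 C Zv \<omega> * indicator E1 \<omega> \<partial>M) - p * (\<integral>\<omega>. Yobs Y0 Y1 C Zv \<omega> * indicator E0 \<omega> \<partial>M))
       - \<beta> * ((1 - p) * (\<integral>\<omega>. Dobs C Zv \<omega> * indicator E1 \<omega> \<partial>M) - p * (\<integral>\<omega>. Dobs C Zv \<omega> * indicator E0 \<omega> \<partial>M))"
    using iY1 iY0 iD1 iD0 by simp
  also have "\<dots> = p * (1 - p) * (rhoZ M Y0 Y1 C Zv l - \<beta> * piZ M C Zv l)"
  proof -
    have m1: "measure M E1 = p" unfolding E1_def p_def pZ_def ..
    have m0: "measure M E0 = 1 - p" unfolding E0_def p_def by (rule M0)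
    have nz: "p \<noteq> 0" "1 - p \<noteq> 0" using p0 p1 unfolding p_def by auto
    have r: "rhoZ M Y0 Y1 C Zv l = (\<integral>\<omega>. Yobs Y0 Y1 C Zv \<omega> * indicator E1 \<omega> \<partial>M) / p
        - (\<integral>\<omega>. Yobs Y0 Y1 C Zv \<omega> * indicator E0 \<omega> \<partial>M) / (1 - p)"
      unfolding rhoZ_def zdiff_def cmean_def E1_def[symmetric] E0_def[symmetric] m1 m0 ..
    have pi: "piZ M C Zv l = (\<integral>\<omega>. Dobs C Zv \<omega> * indicator E1 \<omega> \<partial>M) / p
        - (\<integral>\<omega>. Dobs C Zv \<omega> * indicator E0 \<omega> \<partial>M) / (1 - p)"
      unfolding piZ_def zdiff_def cmean_def E1_def[symmetric] E0_def[symmetric] m1 m0 ..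
    show ?thesis unfolding r pi by (rule ALG4[OF nz])
  qed
  finally show ?thesis unfolding p_def .
qed

lemma PLT1:
  assumes S: "covZ_posdef M Zv"
  shows "pZ M Zv l < 1"
proof -
  interpret prob_space M by (rule P)
  define v where "v = (\<lambda>k. if k = l then 1 else 0::real)"
  have "v \<noteq> (\<lambda>_. 0)" unfolding v_def by (metis one_neq_zero)
  then have "(\<Sum>a\<in>UNIV. \<Sum>b\<in>UNIV. v a * v b * covZ M Zv a b) > 0" using S unfolding covZ_posdef_def by blast
  then have c: "covZ M Zv l l > 0" unfolding v_def VS .
  have E: "{\<omega>\<in>space M. Zv \<omega> l} \<in> sets M" using evZ[of "\<lambda>x. x l"] by simp
  have "(\<integral>\<omega>. Zr Zv l \<omega> * Zr Zv l \<omega> \<partial>M) = (\<integral>\<omega>. indicator {\<omega>\<in>space M. Zv \<omega> l} \<omega> \<partial>M)"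
    by (intro Bochner_Integration.integral_cong refl) (simp add: Zr_def indicator_def)
  also have "\<dots> = pZ M Zv l" unfolding pZ_def using E by (simp add: Int_absorb2 sets.sets_into_space)
  finally have "covZ M Zv l l = pZ M Zv l - pZ M Zv l * pZ M Zv l" unfolding covZ_def by simp
  with c have "pZ M Zv l * (1 - pZ M Zv l) > 0" by (simp add: algebra_simps)
  moreover have "pZ M Zv l \<ge> 0" unfolding pZ_def by simp
  ultimately show ?thesis by (simp add: zero_less_mult_iff)
qed
end

theorem proposition6:
  fixes M :: "'a measure"
    and Y0 Y1 :: "'a \<Rightarrow> real"
    and C :: "'a \<Rightarrow> ('l::finite \<Rightarrow> bool) \<Rightarrow> bool"
    and Zv :: "'a \<Rightarrow> 'l \<Rightarrow> bool"
  assumes "prob_space M"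
    and L2: "CARD('l) \<ge> 2"
    and Y0: "integrable M Y0" and Y1: "integrable M Y1"
    and Cmeas: "C \<in> measurable M (count_space UNIV)"
    and Zmeas: "Zv \<in> measurable M (count_space UNIV)"
    and A1: "indep_A1 M Y0 Y1 C Zv"
    and A2: "\<forall>\<omega>\<in>space M. mono (C \<omega>)"
    and A3p: "\<forall>l. pZ M Zv l > 0"
    and A3pi: "\<forall>l. piZ M C Zv l > 0"
    and A3S: "covZ_posdef M Zv"
  shows "((\<exists>\<beta>0::real. \<forall>l. (\<integral>\<omega>. (Yobs Y0 Y1 C Zv \<omega> - \<beta>0 * Dobs C Zv \<omega>)
                                    * (Zr Zv l \<omega> - pZ M Zv l) \<partial>M) = 0)
           \<longleftrightarrow> (\<forall>l k. wald M Y0 Y1 C Zv l = wald M Y0 Y1 C Zv k))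
       \<and> ((\<forall>l k. wald M Y0 Y1 C Zv l = wald M Y0 Y1 C Zv k)
           \<longleftrightarrow> (\<exists>\<beta>0::real. \<forall>l. (\<Sum>t\<in>UNIV. alpha M C Zv t l * (late M Y0 Y1 C t - \<beta>0)) = 0))"
proof -
  note P = assms(1)
  have p0: "\<And>l. 0 < pZ M Zv l" using A3p by blast
  have p1: "\<And>l. pZ M Zv l < 1" by (rule PLT1[OF P Y0 Y1 Cmeas Zmeas A1 A3S])
  have pi0: "\<And>l. 0 < piZ M C Zv l" using A3pi by blast
  have key: "(rhoZ M Y0 Y1 C Zv l - \<beta> * piZ M C Zv l = 0) \<longleftrightarrow> (\<beta> = wald M Y0 Y1 C Zv l)" for \<beta> l
  proof -
    have "piZ M C Zv l \<noteq> 0" using pi0[of l] by simp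
    then show ?thesis unfolding wald_def by (auto simp: field_simps)
  qed
  have c1: "((\<integral>\<omega>. (Yobs Y0 Y1 C Zv \<omega> - \<beta> * Dobs C Zv \<omega>) * (Zr Zv l \<omega> - pZ M Zv l) \<partial>M) = 0)
      \<longleftrightarrow> (\<beta> = wald M Y0 Y1 C Zv l)" for \<beta> l
  proof -
    have nz: "pZ M Zv l * (1 - pZ M Zv l) \<noteq> 0" using p0[of l] p1[of l] by simp
    show ?thesis
      unfolding MOM[OF P Y0 Y1 Cmeas Zmeas A1 p0 p1] key[symmetric] using nz by simp
  qed
  have c2: "((\<Sum>t\<in>UNIV. alpha M C Zv t l * (late M Y0 Y1 C t - \<beta>)) = 0)
      \<longleftrightarrow> (\<beta> = wald M Y0 Y1 C Zv l)" for \<beta> l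
  proof -
    note d = DEC[OF P Y0 Y1 Cmeas Zmeas A1 p0 p1, of l]
    have "(\<Sum>t\<in>UNIV. alpha M C Zv t l * (late M Y0 Y1 C t - \<beta>))
        = (rhoZ M Y0 Y1 C Zv l - \<beta> * piZ M C Zv l) / piZ M C Zv l"
      unfolding alpha_def ALG3 d(1)[symmetric] d(2)[symmetric] ..
    then show ?thesis unfolding key[symmetric] using pi0[of l] by simp
  qed
  show ?thesis unfolding c1 c2 EXW by simp
qed

end
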